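(* Let $k$ be an algebraically closed field, let $A$ be a local Noetherian $k$-algebra with maximal ideal $\mathfrak{m}$ and residue field $k$, and let $M$ be a finitely generated $A$-module. Then the equalities $$\dim_k (M \otimes_A A/I_n) = n \,\dim_k (M \otimes_A k)$$ hold for all integers $n > 0$ and all ideals $I_n \subset A$ of colength $n$ if and only if the equalities $$\dim_k (M \otimes_A A/\mathfrak{m}^n) = \dim_k (A/\mathfrak{m}^n)\cdot \dim_k (M \otimes_A k)$$ hold for all integers $n > 0$.
   Context: An ideal $I \subset A$ is said to be of colength $n$ if $A/I$ is an Artinian $k$-algebra with $\dim_k A/I = n$. *)

theory Defs
  imports "HOL-Computational_Algebra.Polynomial"
begin

definition algebraically_closed :: "'k::field itself \<Rightarrow> bool" where
  "algebraically_closed _ \<longleftrightarrow> (\<forall>p :: 'k poly. degree p > 0 \<longrightarrow> (\<exists>x. poly p x = 0))"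

definition ring_ideal :: "'a::comm_ring_1 set \<Rightarrow> bool" where
  "ring_ideal I \<longleftrightarrow> module.subspace ((*) :: 'a \<Rightarrow> 'a \<Rightarrow> 'a) I"

definition maximal_ideal :: "'a::comm_ring_1 set \<Rightarrow> bool" where
  "maximal_ideal m \<longleftrightarrow> ring_ideal m \<and> m \<noteq> UNIV \<and>
     (\<forall>J. ring_ideal J \<and> m \<subseteq> J \<longrightarrow> J = m \<or> J = UNIV)"

definition local_ring_with_max :: "'a::comm_ring_1 set \<Rightarrow> bool" where
  "local_ring_with_max m \<longleftrightarrow> maximal_ideal m \<and> (\<forall>J. maximal_ideal J \<longrightarrow> J = m)"

definition noetherian_ring :: "'a::comm_ring_1 itself \<Rightarrow> bool" where
  "noetherian_ring _ \<longleftrightarrow> (\<forall>I :: 'a set. ring_ideal I \<longrightarrow>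
     (\<exists>S. finite S \<and> I = module.span ((*) :: 'a \<Rightarrow> 'a \<Rightarrow> 'a) S))"

text \<open>phi : k \<rightarrow> A is the structure map making A a k-algebra.\<close>
definition ring_hom_fun :: "('k::field \<Rightarrow> 'a::comm_ring_1) \<Rightarrow> bool" where
  "ring_hom_fun phi \<longleftrightarrow> phi 1 = 1 \<and> (\<forall>x y. phi (x + y) = phi x + phi y) \<and>
     (\<forall>x y. phi (x * y) = phi x * phi y)"

text \<open>Residue field k: the composite k \<rightarrow> A \<rightarrow> A/m is surjective (it is automatically
  injective since k is a field and 1 is not in m).\<close>
definition residue_field_is :: "('k::field \<Rightarrow> 'a::comm_ring_1) \<Rightarrow> 'a set \<Rightarrow> bool" where
  "residue_field_is phi m \<longleftrightarrow> (\<forall>a. \<exists>c. a - phi c \<in> m)"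

definition ideal_pow :: "'a::comm_ring_1 set \<Rightarrow> nat \<Rightarrow> 'a set" where
  "ideal_pow m n = module.span ((*) :: 'a \<Rightarrow> 'a \<Rightarrow> 'a)
      {prod_list xs | xs. length xs = n \<and> set xs \<subseteq> m}"

definition ideal_times_mod :: "('a::comm_ring_1 \<Rightarrow> 'm::ab_group_add \<Rightarrow> 'm) \<Rightarrow> 'a set \<Rightarrow> 'm set" where
  "ideal_times_mod sm I = module.span sm {sm a x | a x. a \<in> I}"

definition finitely_generated_mod :: "('a::comm_ring_1 \<Rightarrow> 'm::ab_group_add \<Rightarrow> 'm) \<Rightarrow> bool" where
  "finitely_generated_mod sm \<longleftrightarrow> (\<exists>S. finite S \<and> module.span sm S = UNIV)"

text \<open>Finite dimensionality and dimension of the k-vector space V/N, where V is the whole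
  type with k-scalar multiplication sc and N a subspace: dim = least number of vectors
  spanning V modulo N.  (Convention: 0 if infinite-dimensional.)\<close>
definition fin_quot_dim :: "('k::field \<Rightarrow> 'v::ab_group_add \<Rightarrow> 'v) \<Rightarrow> 'v set \<Rightarrow> bool" where
  "fin_quot_dim sc N \<longleftrightarrow> (\<exists>B. finite B \<and> module.span sc (B \<union> N) = UNIV)"

definition quot_dim :: "('k::field \<Rightarrow> 'v::ab_group_add \<Rightarrow> 'v) \<Rightarrow> 'v set \<Rightarrow> nat" where
  "quot_dim sc N = (if fin_quot_dim sc N
      then (LEAST n. \<exists>B. finite B \<and> card B = n \<and> module.span sc (B \<union> N) = UNIV) else 0)"

text \<open>dim_k (M \<otimes>_A A/I) is computed as dim_k (M / I M).\<close>
definition dim_tensor_quot ::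
  "('k::field \<Rightarrow> 'a::comm_ring_1) \<Rightarrow> ('a \<Rightarrow> 'm::ab_group_add \<Rightarrow> 'm) \<Rightarrow> 'a set \<Rightarrow> nat" where
  "dim_tensor_quot phi sm I = quot_dim (\<lambda>c x. sm (phi c) x) (ideal_times_mod sm I)"

definition dim_ring_quot :: "('k::field \<Rightarrow> 'a::comm_ring_1) \<Rightarrow> 'a set \<Rightarrow> nat" where
  "dim_ring_quot phi I = quot_dim (\<lambda>c a. phi c * a) I"

text \<open>I has colength n: A/I is Artinian (automatic for finite k-dimension) of k-dimension n.\<close>
definition colength :: "('k::field \<Rightarrow> 'a::comm_ring_1) \<Rightarrow> 'a set \<Rightarrow> nat \<Rightarrow> bool" where
  "colength phi I n \<longleftrightarrow> ring_ideal I \<and> fin_quot_dim (\<lambda>c a. phi c * a) I \<and> dim_ring_quot phi I = n"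

end

theory Submission
  imports Defs
begin



definition indep_mod :: "('k::field \<Rightarrow> 'v::ab_group_add \<Rightarrow> 'v) \<Rightarrow> 'v set \<Rightarrow> ('i \<Rightarrow> 'v) \<Rightarrow> 'i set \<Rightarrow> bool" where
  "indep_mod sc N f F \<longleftrightarrow> (\<forall>c. (\<Sum>i\<in>F. sc (c i) (f i)) \<in> N \<longrightarrow> (\<forall>i\<in>F. c i = 0))"

context vector_space
begin

lemma span_Un_subspace:
  assumes "subspace N" "v \<in> span (B \<union> N)"
  shows "\<exists>w\<in>span B. v - w \<in> N"
proof -
  from assms(2) obtain x y where "v = x + y" "x \<in> span B" "y \<in> span N"
    unfolding span_Un by blast
  moreover have "span N = N" using assms(1) by simp
  ultimately show ?thesis by (intro bexI[of _ x]) auto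
qed

lemma qd_le:
  assumes "finite B" "span (B \<union> N) = UNIV"
  shows "quot_dim scale N \<le> card B"
proof -
  have fin: "fin_quot_dim scale N" using assms unfolding fin_quot_dim_def by blast
  show ?thesis unfolding quot_dim_def using fin
    by simp (rule Least_le, use assms in blast)
qed

lemma qd_ex:
  assumes "fin_quot_dim scale N"
  shows "\<exists>B. finite B \<and> card B = quot_dim scale N \<and> span (B \<union> N) = UNIV"
proof -
  from assms obtain B where "finite B" "span (B \<union> N) = UNIV" unfolding fin_quot_dim_def by blast
  then have "\<exists>n B. finite B \<and> card B = n \<and> span (B \<union> N) = UNIV" by blast
  from LeastI_ex[OF this] show ?thesis unfolding quot_dim_def using assms by simp
qed

lemma indep_bound:
  assumes N: "subspace N" and B: "finite B" "span (B \<union> N) = UNIV"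
    and F: "finite F" and ind: "indep_mod scale N f F"
  shows "card F \<le> card B"
proof -
  have "\<forall>i\<in>F. \<exists>w\<in>span B. f i - w \<in> N"
    using span_Un_subspace[OF N] B(2) by blast
  then obtain w where w: "\<And>i. i \<in> F \<Longrightarrow> w i \<in> span B \<and> f i - w i \<in> N"
    by metis
  have inj: "inj_on w F"
  proof (rule inj_onI, rule ccontr)
    fix i j assume ij: "i \<in> F" "j \<in> F" "w i = w j" "i \<noteq> j"
    define c where "c = (\<lambda>l. if l = i then (1::'a) else if l = j then -1 else 0)"
    have pt: "c l *s f l = (if l = i then f i else 0) - (if l = j then f j else 0)" for l
      using ij(4) by (auto simp: c_def)
    have "(\<Sum>l\<in>F. c l *s f l) = f i - f j"
      unfolding pt sum_subtractf using ij F by (simp add: sum.delta)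
    also have "\<dots> = (f i - w i) - (f j - w j)" using ij(3) by simp
    also have "\<dots> \<in> N" by (rule subspace_diff[OF N]) (use w[of i] w[of j] ij(1,2) in auto)
    finally have "c i = 0" using ind ij unfolding indep_mod_def by blast
    then show False by (simp add: c_def)
  qed
  have indw: "independent (w ` F)"
  proof
    assume "dependent (w ` F)"
    then obtain u v where uv: "v \<in> w ` F" "u v \<noteq> 0" "(\<Sum>v\<in>w ` F. u v *s v) = 0"
      using dependent_finite[of "w ` F"] F by auto
    have s0: "(\<Sum>i\<in>F. u (w i) *s w i) = 0"
      using uv(3) by (simp add: sum.reindex[OF inj])
    have "(\<Sum>i\<in>F. u (w i) *s f i) = (\<Sum>i\<in>F. u (w i) *s w i) + (\<Sum>i\<in>F. u (w i) *s (f i - w i))"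
      by (simp add: sum.distrib[symmetric] scale_right_diff_distrib)
    also have "\<dots> \<in> N" unfolding s0 using w N
      by (auto intro!: subspace_sum subspace_scale)
    finally have "\<forall>i\<in>F. u (w i) = 0"
      using ind[unfolded indep_mod_def, THEN spec[of _ "\<lambda>i. u (w i)"]] by simp
    with uv(1,2) show False by auto
  qed
  have "w ` F \<subseteq> span B" using w by auto
  from independent_span_bound[OF B(1) indw this] have "card (w ` F) \<le> card B" by simp
  with card_image[OF inj] show ?thesis by simp
qed

lemma qd_indep:
  assumes F: "finite F" and sp: "span (f ` F \<union> N) = UNIV" and c: "card F \<le> quot_dim scale N"
  shows "indep_mod scale N f F"
  unfolding indep_mod_def
proof (intro allI impI ballI, rule ccontr)
  fix c i0 assume s: "(\<Sum>i\<in>F. c i *s f i) \<in> N" and i0: "i0 \<in> F" and ne: "c i0 \<noteq> 0"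
  define F' where "F' = F - {i0}"
  have split: "(\<Sum>i\<in>F. c i *s f i) = c i0 *s f i0 + (\<Sum>i\<in>F'. c i *s f i)"
    unfolding F'_def using F i0 by (simp add: sum.remove)
  have rest: "(\<Sum>i\<in>F'. c i *s f i) \<in> span (f ` F' \<union> N)"
    by (rule span_sum, rule span_scale, rule span_base) auto
  have sN: "(\<Sum>i\<in>F. c i *s f i) \<in> span (f ` F' \<union> N)"
    using s by (auto intro: span_base)
  have "f i0 = inverse (c i0) *s ((\<Sum>i\<in>F. c i *s f i) - (\<Sum>i\<in>F'. c i *s f i))"
    unfolding split using ne by simp
  also have "\<dots> \<in> span (f ` F' \<union> N)"
    using rest sN by (intro span_scale span_diff)
  finally have fi0: "f i0 \<in> span (f ` F' \<union> N)" .
  have "f ` F \<union> N \<subseteq> span (f ` F' \<union> N)"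
  proof
    fix x assume "x \<in> f ` F \<union> N"
    then consider "x = f i0" | "x \<in> f ` F' \<union> N" unfolding F'_def by auto
    then show "x \<in> span (f ` F' \<union> N)" using fi0 by cases (auto intro: span_base)
  qed
  then have "span (f ` F \<union> N) \<subseteq> span (f ` F' \<union> N)"
    by (metis span_mono span_span)
  then have sp': "span (f ` F' \<union> N) = UNIV" using sp by auto
  have "quot_dim scale N \<le> card (f ` F')"
    using qd_le[OF _ sp'] F unfolding F'_def by simp
  also have "\<dots> \<le> card F'" using F unfolding F'_def by (simp add: card_image_le)
  also have "\<dots> < card F" using F i0 unfolding F'_def
    by (metis card_Diff1_less)
  finally show False using c by simp
qed

lemma qd_eq:
  assumes N: "subspace N" and F: "finite F" and sp: "span (f ` F \<union> N) = UNIV"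
    and ind: "indep_mod scale N f F"
  shows "quot_dim scale N = card F"
proof -
  have fin: "fin_quot_dim scale N" using sp F unfolding fin_quot_dim_def by blast
  obtain B where B: "finite B" "card B = quot_dim scale N" "span (B \<union> N) = UNIV"
    using qd_ex[OF fin] by blast
  have "card F \<le> card B" by (rule indep_bound[OF N B(1) B(3) F ind])
  moreover have "quot_dim scale N \<le> card (f ` F)" using qd_le[OF _ sp] F by simp
  moreover have "card (f ` F) \<le> card F" using F by (simp add: card_image_le)
  ultimately show ?thesis using B(2) by simp
qed

lemma qd_basis:
  assumes "fin_quot_dim scale N"
  shows "\<exists>B. finite B \<and> card B = quot_dim scale N \<and> span (B \<union> N) = UNIV \<and> indep_mod scale N id B"
proof -
  obtain B where B: "finite B" "card B = quot_dim scale N" "span (B \<union> N) = UNIV"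
    using qd_ex[OF assms] by blast
  have "indep_mod scale N id B" by (rule qd_indep) (use B in auto)
  with B show ?thesis by blast
qed

lemma decomp:
  assumes N: "subspace N" and B: "finite B" "span (B \<union> N) = UNIV"
  shows "\<exists>c. v - (\<Sum>b\<in>B. c b *s b) \<in> N"
proof -
  obtain w where "w \<in> span B" "v - w \<in> N" using span_Un_subspace[OF N] B(2) by blast
  then show ?thesis unfolding span_finite[OF B(1)] by auto
qed

end




locale P4 =
  fixes phi :: "'k::field \<Rightarrow> 'a::comm_ring_1"
    and m :: "'a set"
    and sm :: "'a \<Rightarrow> 'm::ab_group_add \<Rightarrow> 'm"
  assumes hom: "ring_hom_fun phi"
    and noeth: "noetherian_ring TYPE('a)"
    and loc: "local_ring_with_max m"
    and res: "residue_field_is phi m"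
    and modM: "module sm"
    and fg: "finitely_generated_mod sm"
begin

sublocale R: module "(*) :: 'a \<Rightarrow> 'a \<Rightarrow> 'a"
  by unfold_locales (simp_all add: algebra_simps)

declare R.scale_scale[simp del]

sublocale Mo: module sm by (rule modM)

lemma phi_add[simp]: "phi (x + y) = phi x + phi y"
  and phi_mult[simp]: "phi (x * y) = phi x * phi y"
  and phi_one[simp]: "phi 1 = 1"
  using hom unfolding ring_hom_fun_def by auto

lemma phi_zero[simp]: "phi 0 = 0"
  using phi_add[of 0 0] by simp

lemma phi_minus[simp]: "phi (- x) = - phi x"
  using phi_add[of x "-x"] by (simp add: add_eq_0_iff)

lemma phi_diff[simp]: "phi (x - y) = phi x - phi y"
  using phi_add[of x "-y"] by simp

sublocale VA: vector_space "\<lambda>c (a::'a). phi c * a"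
  by unfold_locales (simp_all add: algebra_simps)

sublocale VM: vector_space "\<lambda>c x. sm (phi c) x"
  by unfold_locales (simp_all add: Mo.scale_right_distrib Mo.scale_left_distrib)

lemma m_ideal: "R.subspace m"
  using loc unfolding local_ring_with_max_def maximal_ideal_def ring_ideal_def by auto

lemma m_ne: "m \<noteq> UNIV"
  using loc unfolding local_ring_with_max_def maximal_ideal_def by auto

lemma one_notin_m: "1 \<notin> m"
proof
  assume "1 \<in> m"
  then have "a * 1 \<in> m" for a using R.subspace_scale[OF m_ideal] by blast
  then show False using m_ne by auto
qed

lemma phi_in_m: "phi c \<in> m \<Longrightarrow> c = 0"
proof (rule ccontr)
  assume "phi c \<in> m" "c \<noteq> 0"
  then have "phi (inverse c) * phi c \<in> m" using R.subspace_scale[OF m_ideal] by blast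
  then have "phi (inverse c * c) \<in> m" by simp
  with \<open>c \<noteq> 0\<close> one_notin_m show False by simp
qed

lemma R_sub_VA: "R.subspace I \<Longrightarrow> VA.subspace I"
  unfolding R.subspace_def VA.subspace_def by auto

lemma Mo_sub_VM: "Mo.subspace I \<Longrightarrow> VM.subspace I"
  unfolding Mo.subspace_def VM.subspace_def by auto

lemma unit:
  assumes "u \<notin> m"
  shows "\<exists>v. u * v = 1"
proof (rule ccontr)
  assume nu: "\<not> (\<exists>v. u * v = 1)"
  define J0 where "J0 = range (\<lambda>v. u * v)"
  define \<A> where "\<A> = {J. R.subspace J \<and> J0 \<subseteq> J \<and> 1 \<notin> J}"
  have J0: "J0 \<in> \<A>"
  proof -
    have "R.subspace J0" unfolding J0_def R.subspace_def
    proof (intro conjI ballI allI)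
      show "0 \<in> range ((*) u)" by (rule image_eqI[of _ _ 0]) auto
      fix x y assume "x \<in> range ((*) u)" "y \<in> range ((*) u)"
      then show "x + y \<in> range ((*) u)" by (auto simp: distrib_left[symmetric])
    next
      fix c x assume "x \<in> range ((*) u)"
      then obtain a where "x = u * a" by auto
      then show "c * x \<in> range ((*) u)" by (intro image_eqI[of _ _ "c * a"]) (simp_all add: mult.left_commute)
    qed
    then show ?thesis unfolding \<A>_def using nu unfolding J0_def by auto
  qed
  have "\<forall>C\<in>chains \<A>. \<exists>U\<in>\<A>. \<forall>X\<in>C. X \<subseteq> U"
  proof
    fix C assume C: "C \<in> chains \<A>"
    show "\<exists>U\<in>\<A>. \<forall>X\<in>C. X \<subseteq> U"
    proof (cases "C = {}")
      case True then show ?thesis using J0 by auto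
    next
      case False
      have CA: "C \<subseteq> \<A>" using C unfolding chains_def by auto
      have "\<Union>C \<in> \<A>"
        unfolding \<A>_def R.subspace_def
      proof (intro CollectI conjI ballI allI)
        show "0 \<in> \<Union>C" using False CA unfolding \<A>_def by (auto intro: R.subspace_0)
        show "J0 \<subseteq> \<Union>C" using False CA unfolding \<A>_def by auto
        show "1 \<notin> \<Union>C" using CA unfolding \<A>_def by auto
        fix x y assume "x \<in> \<Union>C" "y \<in> \<Union>C"
        then obtain X Y where "X \<in> C" "Y \<in> C" "x \<in> X" "y \<in> Y" by auto
        with chainsD[OF C this(1,2)] CA show "x + y \<in> \<Union>C"
          unfolding \<A>_def by (auto intro: R.subspace_add)
      next
        fix c x assume "x \<in> \<Union>C"
        then obtain X where "X \<in> C" "x \<in> X" by auto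
        with CA show "c * x \<in> \<Union>C" unfolding \<A>_def by (auto intro: R.subspace_scale)
      qed
      then show ?thesis by auto
    qed
  qed
  from Zorn_Lemma2[OF this] obtain M where M: "M \<in> \<A>" "\<forall>X\<in>\<A>. M \<subseteq> X \<longrightarrow> X = M" by blast
  have "maximal_ideal M"
    unfolding maximal_ideal_def ring_ideal_def
  proof (intro conjI allI impI)
    show "R.subspace M" using M unfolding \<A>_def by auto
    show "M \<noteq> UNIV" using M unfolding \<A>_def by auto
    fix J assume J: "R.subspace J \<and> M \<subseteq> J"
    show "J = M \<or> J = UNIV"
    proof (cases "1 \<in> J")
      case True
      then have "a * 1 \<in> J" for a using J R.subspace_scale by blast
      then show ?thesis by auto
    next
      case False
      then have "J \<in> \<A>" using J M unfolding \<A>_def by auto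
      then show ?thesis using M J by auto
    qed
  qed
  then have "M = m" using loc unfolding local_ring_with_max_def by auto
  moreover have "u \<in> M"
  proof -
    have "u * 1 \<in> J0" unfolding J0_def by blast
    then show ?thesis using M unfolding \<A>_def by auto
  qed
  ultimately show False using assms by simp
qed

end



definition Mon :: "'a::comm_ring_1 set \<Rightarrow> nat \<Rightarrow> 'a set" where
  "Mon G j = {prod_list ys | ys. length ys = j \<and> set ys \<subseteq> G}"

definition MonLt :: "'a::comm_ring_1 set \<Rightarrow> nat \<Rightarrow> 'a set" where
  "MonLt G j = {prod_list ys | ys. length ys < j \<and> set ys \<subseteq> G}"

lemma finite_MonLt: "finite G \<Longrightarrow> finite (MonLt G j)"
proof -
  assume G: "finite G"
  have "MonLt G j \<subseteq> prod_list ` {ys. set ys \<subseteq> G \<and> length ys \<le> j}"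
    unfolding MonLt_def by auto
  moreover have "finite (prod_list ` {ys. set ys \<subseteq> G \<and> length ys \<le> j})"
    using finite_lists_length_le[OF G] by blast
  ultimately show ?thesis by (rule finite_subset)
qed

context P4
begin

definition gens :: "nat \<Rightarrow> 'a set" where
  "gens j = {prod_list xs | xs. length xs = j \<and> set xs \<subseteq> m}"

lemma pow_def': "ideal_pow m j = R.span (gens j)"
  unfolding ideal_pow_def gens_def by simp

lemma pow_ideal: "R.subspace (ideal_pow m n)"
  unfolding pow_def' by (rule R.subspace_span)

lemma pow_0: "ideal_pow m 0 = UNIV"
proof -
  have "1 \<in> ideal_pow m 0" unfolding pow_def' gens_def
    by (rule R.span_base) (auto intro: exI[of _ "[]"])
  then have "a * 1 \<in> ideal_pow m 0" for a by (rule R.subspace_scale[OF pow_ideal])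
  then show ?thesis by auto
qed

lemma pow_mult:
  assumes "a \<in> ideal_pow m j" "c \<in> m"
  shows "a * c \<in> ideal_pow m (Suc j)"
  using assms(1) unfolding pow_def'
proof (induction rule: R.span_induct_alt)
  case base then show ?case by (simp add: R.span_zero)
next
  case (step s x y)
  from step(1) obtain xs where xs: "x = prod_list xs" "length xs = j" "set xs \<subseteq> m"
    unfolding gens_def by auto
  have "x * c \<in> gens (Suc j)" unfolding gens_def using xs assms(2)
    by (intro CollectI exI[of _ "c # xs"]) (auto simp: mult.commute)
  then have "s * (x * c) + y * c \<in> R.span (gens (Suc j))"
    using R.span_add[OF R.span_scale[OF R.span_base] step(2)] by blast
  then show ?case by (simp add: algebra_simps)
qed

lemma pow_Suc_sub: "ideal_pow m (Suc j) \<subseteq> ideal_pow m j"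
proof -
  have "gens (Suc j) \<subseteq> ideal_pow m j"
  proof
    fix z assume "z \<in> gens (Suc j)"
    then obtain x xs where z: "z = prod_list (x # xs)" "length xs = j" "set xs \<subseteq> m" "x \<in> m"
      unfolding gens_def by (auto simp: length_Suc_conv)
    have "prod_list xs \<in> ideal_pow m j" unfolding pow_def' gens_def
      using z by (intro R.span_base) auto
    then have "x * prod_list xs \<in> ideal_pow m j" by (rule R.subspace_scale[OF pow_ideal])
    then show "z \<in> ideal_pow m j" using z by simp
  qed
  then show ?thesis unfolding pow_def'[of "Suc j"] by (rule R.span_minimal) (simp add: pow_def')
qed

lemma pow_sub_m: "0 < n \<Longrightarrow> ideal_pow m n \<subseteq> m"
proof -
  assume "0 < n"
  then obtain j where n: "n = Suc j" by (cases n) auto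
  have "gens (Suc j) \<subseteq> m"
  proof
    fix z assume "z \<in> gens (Suc j)"
    then obtain x xs where z: "z = prod_list (x # xs)" "x \<in> m"
      unfolding gens_def by (auto simp: length_Suc_conv)
    have "prod_list xs * x \<in> m" by (rule R.subspace_scale[OF m_ideal z(2)])
    then show "z \<in> m" using z by (simp add: mult.commute)
  qed
  then show ?thesis unfolding n pow_def' by (rule R.span_minimal[OF _ m_ideal])
qed

lemma m_fg: "\<exists>G. finite G \<and> R.span G = m"
  using noeth m_ideal unfolding noetherian_ring_def ring_ideal_def by auto

lemma mono_span:
  assumes G: "finite G" "R.span G = m"
  shows "set xs \<subseteq> m \<Longrightarrow> prod_list xs \<in> R.span (Mon G (length xs))"
proof (induction xs)
  case Nil
  show ?case unfolding Mon_def by (rule R.span_base) (auto intro: exI[of _ "[]"])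
next
  case (Cons x xs)
  define P where "P = prod_list xs"
  have P: "P \<in> R.span (Mon G (length xs))" using Cons unfolding P_def by auto
  have gP: "g * P \<in> R.span (Mon G (Suc (length xs)))" if g: "g \<in> G" for g
    using P
  proof (induction rule: R.span_induct_alt)
    case base then show ?case by (simp add: R.span_zero)
  next
    case (step s y z)
    from step(1) obtain ys where ys: "y = prod_list ys" "length ys = length xs" "set ys \<subseteq> G"
      unfolding Mon_def by auto
    have "g * y \<in> Mon G (Suc (length xs))" unfolding Mon_def using ys g
      by (intro CollectI exI[of _ "g # ys"]) auto
    then have "s * (g * y) + g * z \<in> R.span (Mon G (Suc (length xs)))"
      using R.span_add[OF R.span_scale[OF R.span_base] step(2)] by blast
    then show ?case by (simp add: algebra_simps)
  qed
  have "x \<in> R.span G" using Cons.prems G by simp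
  then obtain u where x: "x = (\<Sum>g\<in>G. u g * g)" unfolding R.span_finite[OF G(1)] by auto
  have "prod_list (x # xs) = (\<Sum>g\<in>G. u g * (g * P))"
    unfolding x P_def by (simp add: sum_distrib_right mult.assoc)
  also have "\<dots> \<in> R.span (Mon G (Suc (length xs)))"
    by (rule R.span_sum, rule R.span_scale, erule gP)
  finally show ?case by simp
qed

lemma pow_sub_span_mon:
  assumes G: "finite G" "R.span G = m"
  shows "ideal_pow m j \<subseteq> R.span (Mon G j)"
  unfolding pow_def'
proof (rule R.span_minimal[OF _ R.subspace_span])
  show "gens j \<subseteq> R.span (Mon G j)"
    unfolding gens_def using mono_span[OF G] by auto
qed

lemma G_sub_m: "R.span G = m \<Longrightarrow> G \<subseteq> m"
  using R.span_superset by auto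

lemma Mon_sub_pow: "G \<subseteq> m \<Longrightarrow> Mon G j \<subseteq> ideal_pow m j"
  unfolding pow_def' Mon_def gens_def by (auto intro!: R.span_base)

lemma pow_step:
  assumes G: "finite G" "R.span G = m"
  shows "ideal_pow m j \<subseteq> VA.span (Mon G j \<union> ideal_pow m (Suc j))"
proof -
  define W where "W = VA.span (Mon G j \<union> ideal_pow m (Suc j))"
  have Wsub: "W \<subseteq> ideal_pow m j" unfolding W_def
    using Mon_sub_pow[OF G_sub_m[OF G(2)]] pow_Suc_sub R_sub_VA[OF pow_ideal]
    by (intro VA.span_minimal) auto
  have "R.subspace W" unfolding R.subspace_def
  proof (intro conjI ballI allI)
    show "0 \<in> W" unfolding W_def by (rule VA.span_zero)
    fix x y assume "x \<in> W" "y \<in> W" then show "x + y \<in> W" unfolding W_def by (rule VA.span_add)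
  next
    fix a w assume w: "w \<in> W"
    obtain c where c: "a - phi c \<in> m" using res unfolding residue_field_is_def by blast
    have "phi c * w \<in> W" using w unfolding W_def by (rule VA.span_scale)
    moreover have "w * (a - phi c) \<in> ideal_pow m (Suc j)" using Wsub w c by (intro pow_mult) auto
    then have "w * (a - phi c) \<in> W" unfolding W_def by (intro VA.span_base) auto
    ultimately have "phi c * w + w * (a - phi c) \<in> W" unfolding W_def by (rule VA.span_add)
    then show "a * w \<in> W" by (simp add: algebra_simps)
  qed
  moreover have "Mon G j \<subseteq> W" unfolding W_def by (auto intro: VA.span_base)
  ultimately have "R.span (Mon G j) \<subseteq> W" by (intro R.span_minimal)
  with pow_sub_span_mon[OF G] show ?thesis unfolding W_def by auto
qed

lemma span_MonLt:
  assumes G: "finite G" "R.span G = m"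
  shows "VA.span (MonLt G N \<union> ideal_pow m N) = UNIV"
proof (induction N)
  case 0 then show ?case using pow_0 VA.span_superset by auto
next
  case (Suc N)
  define S where "S = MonLt G (Suc N) \<union> ideal_pow m (Suc N)"
  have "MonLt G N \<subseteq> VA.span S" unfolding S_def MonLt_def
    by (auto intro!: VA.span_base)
  moreover have "ideal_pow m N \<subseteq> VA.span S"
  proof -
    have "Mon G N \<union> ideal_pow m (Suc N) \<subseteq> S" unfolding S_def Mon_def MonLt_def by auto
    then have "VA.span (Mon G N \<union> ideal_pow m (Suc N)) \<subseteq> VA.span S" by (rule VA.span_mono)
    with pow_step[OF G, of N] show ?thesis by auto
  qed
  ultimately have "VA.span (MonLt G N \<union> ideal_pow m N) \<subseteq> VA.span S"
    by (intro VA.span_minimal) auto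
  then show ?case using Suc unfolding S_def by auto
qed

lemma fin_pow: "fin_quot_dim (\<lambda>c a. phi c * a) (ideal_pow m N)"
proof -
  obtain G where G: "finite G" "R.span G = m" using m_fg by blast
  show ?thesis unfolding fin_quot_dim_def
    using span_MonLt[OF G, of N] finite_MonLt[OF G(1)] by blast
qed

end



lemma prod_list_count:
  "prod_list ys = (g::'a::comm_monoid_mult) ^ count_list ys g * prod_list (removeAll g ys)"
  by (induction ys) (auto simp: algebra_simps)

context P4
begin

lemma nilp:
  assumes I: "R.subspace I" "fin_quot_dim (\<lambda>c a. phi c * a) I" and a: "a \<in> m"
  shows "\<exists>i \<le> quot_dim (\<lambda>c a. phi c * a) I. a ^ i \<in> I"
proof -
  define n where "n = quot_dim (\<lambda>c a. phi c * a) I"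
  obtain B where B: "finite B" "card B = n" "VA.span (B \<union> I) = UNIV"
    using VA.qd_ex[OF I(2)] unfolding n_def by blast
  have "\<not> indep_mod (\<lambda>c a. phi c * a) I (\<lambda>i. a ^ i) {0..n}"
  proof
    assume "indep_mod (\<lambda>c a. phi c * a) I (\<lambda>i. a ^ i) {0..n}"
    from VA.indep_bound[OF R_sub_VA[OF I(1)] B(1) B(3) _ this] B(2) show False by simp
  qed
  then obtain c i1 where c: "(\<Sum>i\<in>{0..n}. phi (c i) * a ^ i) \<in> I" "i1 \<in> {0..n}" "c i1 \<noteq> 0"
    unfolding indep_mod_def by blast
  define Z where "Z = {i\<in>{0..n}. c i \<noteq> 0}"
  define i0 where "i0 = Min Z"
  have Zf: "finite Z" "Z \<noteq> {}" using c unfolding Z_def by auto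
  have i0: "i0 \<in> Z" unfolding i0_def using Zf by (rule Min_in)
  have i0le: "i0 \<le> n" "c i0 \<noteq> 0" using i0 unfolding Z_def by auto
  have below: "c i = 0" if "i < i0" for i
  proof (rule ccontr)
    assume "c i \<noteq> 0"
    then have "i \<in> Z" using that i0le unfolding Z_def by auto
    then have "i0 \<le> i" unfolding i0_def using Zf by simp
    with that show False by simp
  qed
  define u where "u = (\<Sum>i\<in>{i0..n}. phi (c i) * a ^ (i - i0))"
  have "(\<Sum>i\<in>{0..n}. phi (c i) * a ^ i) = (\<Sum>i\<in>{i0..n}. phi (c i) * a ^ i)"
    by (rule sum.mono_neutral_right) (auto simp: below)
  also have "\<dots> = a ^ i0 * u" unfolding u_def sum_distrib_left
  proof (rule sum.cong[OF refl])
    fix i assume "i \<in> {i0..n}"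
    then have "a ^ i = a ^ i0 * a ^ (i - i0)" by (simp add: power_add[symmetric])
    then show "phi (c i) * a ^ i = a ^ i0 * (phi (c i) * a ^ (i - i0))" by (simp add: algebra_simps)
  qed
  finally have ui: "a ^ i0 * u \<in> I" using c(1) by simp
  have rest: "(\<Sum>i\<in>{Suc i0..n}. phi (c i) * a ^ (i - i0)) \<in> m"
  proof (rule R.subspace_sum[OF m_ideal])
    fix i assume "i \<in> {Suc i0..n}"
    then have e: "i - i0 = Suc (i - Suc i0)" by auto
    then have "a ^ (i - i0) = a ^ (i - Suc i0) * a" by (simp add: mult.commute)
    moreover have "a ^ (i - Suc i0) * a \<in> m" using R.subspace_scale[OF m_ideal a] .
    ultimately have "a ^ (i - i0) \<in> m" by simp
    then show "phi (c i) * a ^ (i - i0) \<in> m" using R.subspace_scale[OF m_ideal] by blast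
  qed
  have u: "u = phi (c i0) + (\<Sum>i\<in>{Suc i0..n}. phi (c i) * a ^ (i - i0))"
    unfolding u_def using i0le by (simp add: sum.atLeast_Suc_atMost)
  have "u \<notin> m"
  proof
    assume "u \<in> m"
    then have "u - (\<Sum>i\<in>{Suc i0..n}. phi (c i) * a ^ (i - i0)) \<in> m"
      using rest by (rule R.subspace_diff[OF m_ideal])
    then have "phi (c i0) \<in> m" using u by simp
    with phi_in_m i0le show False by blast
  qed
  then obtain v where v: "u * v = 1" using unit by blast
  have "v * (a ^ i0 * u) \<in> I" using R.subspace_scale[OF I(1) ui] .
  moreover have "v * (a ^ i0 * u) = a ^ i0 * (u * v)" by (simp add: ac_simps)
  ultimately have "a ^ i0 \<in> I" using v by simp
  with i0le show ?thesis unfolding n_def by blast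
qed

lemma pow_sub_I:
  assumes I: "R.subspace I" "fin_quot_dim (\<lambda>c a. phi c * a) I"
  shows "\<exists>N>0. ideal_pow m N \<subseteq> I"
proof -
  define n where "n = quot_dim (\<lambda>c a. phi c * a) I"
  have nil: "a ^ k \<in> I" if am: "a \<in> m" and nk: "n \<le> k" for a k
  proof -
    obtain i where i: "i \<le> n" "a ^ i \<in> I" using nilp[OF I am] unfolding n_def by blast
    have "a ^ (k - i) * a ^ i \<in> I" by (rule R.subspace_scale[OF I(1) i(2)])
    then show ?thesis using i(1) nk by (simp add: power_add[symmetric])
  qed
  obtain G where G: "finite G" "R.span G = m" using m_fg by blast
  define N where "N = card G * n + 1"
  have "Mon G N \<subseteq> I"
  proof
    fix z assume "z \<in> Mon G N"
    then obtain ys where ys: "z = prod_list ys" "length ys = N" "set ys \<subseteq> G" unfolding Mon_def by auto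
    have "\<exists>g\<in>G. n < count_list ys g"
    proof (rule ccontr)
      assume "\<not> (\<exists>g\<in>G. n < count_list ys g)"
      then have "\<forall>g\<in>G. count_list ys g \<le> n" by auto
      then have "sum (count_list ys) G \<le> card G * n" using sum_bounded_above[of G "count_list ys" n] by simp
      with sum_count_set[OF ys(3) G(1)] ys(2) show False unfolding N_def by simp
    qed
    then obtain g where g: "g \<in> G" "n < count_list ys g" by blast
    have "g \<in> m" using g(1) G_sub_m[OF G(2)] by auto
    then have "g ^ count_list ys g \<in> I" using nil g(2) by simp
    then have "prod_list (removeAll g ys) * g ^ count_list ys g \<in> I" by (rule R.subspace_scale[OF I(1)])
    then show "z \<in> I" unfolding ys(1) prod_list_count[of ys g] by (simp add: mult.commute)
  qed
  then have "R.span (Mon G N) \<subseteq> I" by (rule R.span_minimal[OF _ I(1)])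
  with pow_sub_span_mon[OF G, of N] have "ideal_pow m N \<subseteq> I" by auto
  then show ?thesis unfolding N_def by auto
qed

end



context P4
begin

abbreviation IM :: "'a set \<Rightarrow> 'm set" where "IM J \<equiv> ideal_times_mod sm J"

lemma IM_def': "IM J = Mo.span {sm a x | a x. a \<in> J}"
  unfolding ideal_times_mod_def by simp

lemma IM_sub: "Mo.subspace (IM J)"
  unfolding IM_def' by (rule Mo.subspace_span)

lemma IM_VM: "VM.subspace (IM J)"
  by (rule Mo_sub_VM[OF IM_sub])

lemma IM_base: "a \<in> J \<Longrightarrow> sm a x \<in> IM J"
  unfolding IM_def' by (rule Mo.span_base) blast

lemma IM_mono: "J \<subseteq> J' \<Longrightarrow> IM J \<subseteq> IM J'"
  unfolding IM_def' by (rule Mo.span_mono) blast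

definition dec :: "'a set \<Rightarrow> 'm set \<Rightarrow> bool" where
  "dec J X \<longleftrightarrow> (\<forall>v. \<exists>u z. z \<in> IM J \<and> v = (\<Sum>x\<in>X. sm (u x) x) + z)"

lemma dec_mono: "J \<subseteq> J' \<Longrightarrow> dec J X \<Longrightarrow> dec J' X"
  unfolding dec_def using IM_mono by blast

lemma sum_rearr:
  "(\<Sum>x\<in>X. sm (\<Sum>b\<in>B. phi (C (b, x)) * b) x)
     = (\<Sum>i\<in>B \<times> X. sm (phi (C i)) ((\<lambda>(b, x). sm b x) i))"
proof -
  have "(\<Sum>x\<in>X. sm (\<Sum>b\<in>B. phi (C (b, x)) * b) x) = (\<Sum>x\<in>X. \<Sum>b\<in>B. sm (phi (C (b, x))) (sm b x))"
    by (simp add: Mo.scale_sum_left)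
  also have "\<dots> = (\<Sum>b\<in>B. \<Sum>x\<in>X. sm (phi (C (b, x))) (sm b x))" by (rule sum.swap)
  also have "\<dots> = (\<Sum>(b, x)\<in>B \<times> X. sm (phi (C (b, x))) (sm b x))" by (rule sum.cartesian_product)
  also have "\<dots> = (\<Sum>i\<in>B \<times> X. sm (phi (C i)) ((\<lambda>(b, x). sm b x) i))"
    by (rule sum.cong) auto
  finally show ?thesis .
qed

lemma lemG:
  assumes J: "R.subspace J" and B: "finite B" "VA.span (B \<union> J) = UNIV"
    and X: "finite X" and d: "dec J X"
  shows "VM.span ((\<lambda>(b, x). sm b x) ` (B \<times> X) \<union> IM J) = UNIV"
proof -
  define W where "W = VM.span ((\<lambda>(b, x). sm b x) ` (B \<times> X) \<union> IM J)"
  have ax: "sm a x \<in> W" if x: "x \<in> X" for a x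
  proof -
    define Q where "Q = {a. sm a x \<in> W}"
    have q0: "sm 0 x \<in> W" unfolding W_def by (simp add: VM.span_zero)
    have qa: "sm (p + q) x \<in> W" if "sm p x \<in> W" "sm q x \<in> W" for p q
      using that unfolding W_def by (simp add: Mo.scale_left_distrib VM.span_add)
    have qs: "sm (phi c * p) x \<in> W" if "sm p x \<in> W" for c p
    proof -
      have "sm (phi c) (sm p x) \<in> W" using that unfolding W_def by (rule VM.span_scale)
      then show ?thesis by simp
    qed
    have "VA.subspace Q" unfolding Q_def VA.subspace_def using q0 qa qs by auto
    moreover have "B \<union> J \<subseteq> Q" unfolding Q_def W_def using x
      by (auto intro!: VM.span_base IM_base)
    ultimately have "VA.span (B \<union> J) \<subseteq> Q" by (rule VA.span_minimal[rotated])
    then show ?thesis using B(2) unfolding Q_def by auto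
  qed
  have "v \<in> W" for v
  proof -
    obtain u z where uz: "z \<in> IM J" "v = (\<Sum>x\<in>X. sm (u x) x) + z" using d unfolding dec_def by blast
    have "(\<Sum>x\<in>X. sm (u x) x) \<in> W" unfolding W_def using ax unfolding W_def
      by (intro VM.span_sum) auto
    moreover have "z \<in> W" unfolding W_def using uz(1) by (intro VM.span_base) auto
    ultimately show ?thesis unfolding uz(2) W_def by (rule VM.span_add)
  qed
  then show ?thesis unfolding W_def by auto
qed

lemma lemGi:
  assumes J: "R.subspace J" and B: "finite B" "VA.span (B \<union> J) = UNIV"
    and X: "finite X"
    and ind: "indep_mod (\<lambda>c x. sm (phi c) x) (IM J) (\<lambda>(b, x). sm b x) (B \<times> X)"
    and s: "(\<Sum>x\<in>X. sm (a x) x) \<in> IM J"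
  shows "\<forall>x\<in>X. a x \<in> J"
proof -
  have "\<forall>x. \<exists>c. a x - (\<Sum>b\<in>B. phi (c b) * b) \<in> J"
    using VA.decomp[OF R_sub_VA[OF J] B] by blast
  then obtain c where c: "\<And>x. a x - (\<Sum>b\<in>B. phi (c x b) * b) \<in> J" by metis
  define C where "C = (\<lambda>(b, x). c x b)"
  have e: "(\<Sum>x\<in>X. sm (a x) x) = (\<Sum>x\<in>X. sm (\<Sum>b\<in>B. phi (C (b, x)) * b) x)
      + (\<Sum>x\<in>X. sm (a x - (\<Sum>b\<in>B. phi (c x b) * b)) x)"
    unfolding C_def by (simp add: sum.distrib[symmetric] Mo.scale_left_diff_distrib)
  have r: "(\<Sum>x\<in>X. sm (a x - (\<Sum>b\<in>B. phi (c x b) * b)) x) \<in> IM J"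
    by (rule Mo.subspace_sum[OF IM_sub], rule IM_base, rule c)
  have "(\<Sum>x\<in>X. sm (\<Sum>b\<in>B. phi (C (b, x)) * b) x) \<in> IM J"
    using Mo.subspace_diff[OF IM_sub s r] unfolding e by simp
  then have "(\<Sum>i\<in>B \<times> X. sm (phi (C i)) ((\<lambda>(b, x). sm b x) i)) \<in> IM J"
    unfolding sum_rearr .
  then have C0: "\<forall>i\<in>B \<times> X. C i = 0" using ind unfolding indep_mod_def by blast
  show ?thesis
  proof
    fix x assume x: "x \<in> X"
    have "(\<Sum>b\<in>B. phi (c x b) * b) = 0" using C0 x unfolding C_def by auto
    then show "a x \<in> J" using c[of x] by simp
  qed
qed

lemma dec_m:
  assumes X: "finite X" and sp: "VM.span (X \<union> IM m) = UNIV"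
  shows "dec m X"
  unfolding dec_def
proof
  fix v
  obtain w where w: "w \<in> VM.span X" "v - w \<in> IM m"
    using VM.span_Un_subspace[OF IM_VM] sp by blast
  then obtain u where "w = (\<Sum>x\<in>X. sm (phi (u x)) x)" unfolding VM.span_finite[OF X] by auto
  then show "\<exists>u z. z \<in> IM m \<and> v = (\<Sum>x\<in>X. sm (u x) x) + z"
    using w by (intro exI[of _ "\<lambda>x. phi (u x)"] exI[of _ "v - w"]) auto
qed

lemma dec_pow:
  assumes d: "dec m X"
  shows "dec (ideal_pow m N) X"
proof (induction N)
  case 0
  show ?case unfolding dec_def pow_0
  proof
    fix v
    have "sm 1 v \<in> IM UNIV" by (rule IM_base) auto
    then show "\<exists>u z. z \<in> IM UNIV \<and> v = (\<Sum>x\<in>X. sm (u x) x) + z"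
      by (intro exI[of _ "\<lambda>x. 0"] exI[of _ v]) auto
  qed
next
  case (Suc j)
  have IH: "dec (ideal_pow m j) X" by (rule Suc.IH)
  define T where "T = {(\<Sum>x\<in>X. sm (u x) x) + z | u z. z \<in> IM (ideal_pow m (Suc j))}"
  have Tsub: "Mo.subspace T" unfolding Mo.subspace_def
  proof (intro conjI ballI allI)
    show "0 \<in> T" unfolding T_def using Mo.subspace_0[OF IM_sub]
      by (intro CollectI exI[of _ "\<lambda>x. 0"] exI[of _ 0]) auto
    fix p q assume "p \<in> T" "q \<in> T"
    then obtain u1 z1 u2 z2 where "p = (\<Sum>x\<in>X. sm (u1 x) x) + z1" "z1 \<in> IM (ideal_pow m (Suc j))"
      "q = (\<Sum>x\<in>X. sm (u2 x) x) + z2" "z2 \<in> IM (ideal_pow m (Suc j))" unfolding T_def by blast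
    then show "p + q \<in> T" unfolding T_def
      by (intro CollectI exI[of _ "\<lambda>x. u1 x + u2 x"] exI[of _ "z1 + z2"])
        (auto simp: Mo.scale_left_distrib sum.distrib intro: Mo.subspace_add[OF IM_sub])
  next
    fix s p assume "p \<in> T"
    then obtain u z where "p = (\<Sum>x\<in>X. sm (u x) x) + z" "z \<in> IM (ideal_pow m (Suc j))"
      unfolding T_def by blast
    then show "sm s p \<in> T" unfolding T_def
      by (intro CollectI exI[of _ "\<lambda>x. s * u x"] exI[of _ "sm s z"])
        (auto simp: Mo.scale_right_distrib Mo.scale_sum_right intro: Mo.subspace_scale[OF IM_sub])
  qed
  have aIM: "sm a z \<in> IM (ideal_pow m (Suc j))" if a: "a \<in> ideal_pow m j" and z: "z \<in> IM m" for a z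
    using z unfolding IM_def'[of m]
  proof (induction rule: Mo.span_induct_alt)
    case base then show ?case using Mo.subspace_0[OF IM_sub] by simp
  next
    case (step s g z')
    from step(1) obtain c w where g: "g = sm c w" "c \<in> m" by blast
    have acw: "sm (a * c) w \<in> IM (ideal_pow m (Suc j))" by (rule IM_base, rule pow_mult[OF a g(2)])
    have "sm s (sm (a * c) w) + sm a z' \<in> IM (ideal_pow m (Suc j))"
      using Mo.subspace_add[OF IM_sub Mo.subspace_scale[OF IM_sub acw] step(2)] .
    then show ?case unfolding g by (simp add: Mo.scale_right_distrib mult.commute mult.left_commute)
  qed
  have "IM (ideal_pow m j) \<subseteq> T" unfolding IM_def'[of "ideal_pow m j"]
  proof (rule Mo.span_minimal[OF _ Tsub])
    show "{sm a x |a x. a \<in> ideal_pow m j} \<subseteq> T"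
    proof safe
      fix a y assume a: "a \<in> ideal_pow m j"
      obtain u z where uz: "z \<in> IM m" "y = (\<Sum>x\<in>X. sm (u x) x) + z" using d unfolding dec_def by blast
      show "sm a y \<in> T" unfolding T_def uz(2)
        by (intro CollectI exI[of _ "\<lambda>x. a * u x"] exI[of _ "sm a z"])
          (auto simp: Mo.scale_right_distrib Mo.scale_sum_right aIM[OF a uz(1)])
    qed
  qed
  show ?case unfolding dec_def
  proof
    fix v
    obtain u z where uz: "z \<in> IM (ideal_pow m j)" "v = (\<Sum>x\<in>X. sm (u x) x) + z"
      using IH unfolding dec_def by blast
    have "z \<in> T" using uz(1) \<open>IM (ideal_pow m j) \<subseteq> T\<close> by auto
    then obtain u' z' where u'z': "z = (\<Sum>x\<in>X. sm (u' x) x) + z'" "z' \<in> IM (ideal_pow m (Suc j))"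
      unfolding T_def by blast
    show "\<exists>u z. z \<in> IM (ideal_pow m (Suc j)) \<and> v = (\<Sum>x\<in>X. sm (u x) x) + z"
      using u'z' uz(2)
      by (intro exI[of _ "\<lambda>x. u x + u' x"] exI[of _ z'])
        (auto simp: Mo.scale_left_distrib sum.distrib algebra_simps)
  qed
qed

lemma IM_repr:
  assumes d: "dec (ideal_pow m N) X" and J: "R.subspace J"
  shows "IM J \<subseteq> {(\<Sum>x\<in>X. sm (e x) x) + z | e z. (\<forall>x. e x \<in> J) \<and> z \<in> IM (ideal_pow m N)}"
    (is "_ \<subseteq> ?T")
proof -
  have Tsub: "Mo.subspace ?T" unfolding Mo.subspace_def
  proof (intro conjI ballI allI)
    show "0 \<in> ?T" using Mo.subspace_0[OF IM_sub] R.subspace_0[OF J]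
      by (intro CollectI exI[of _ "\<lambda>x. 0"] exI[of _ 0]) auto
    fix p q assume "p \<in> ?T" "q \<in> ?T"
    then obtain u1 z1 u2 z2 where "p = (\<Sum>x\<in>X. sm (u1 x) x) + z1" "z1 \<in> IM (ideal_pow m N)"
      "q = (\<Sum>x\<in>X. sm (u2 x) x) + z2" "z2 \<in> IM (ideal_pow m N)" "\<forall>x. u1 x \<in> J" "\<forall>x. u2 x \<in> J"
      by blast
    then show "p + q \<in> ?T"
      by (intro CollectI exI[of _ "\<lambda>x. u1 x + u2 x"] exI[of _ "z1 + z2"])
        (auto simp: Mo.scale_left_distrib sum.distrib intro: Mo.subspace_add[OF IM_sub] R.subspace_add[OF J])
  next
    fix s p assume "p \<in> ?T"
    then obtain u z where "p = (\<Sum>x\<in>X. sm (u x) x) + z" "z \<in> IM (ideal_pow m N)" "\<forall>x. u x \<in> J"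
      by blast
    then show "sm s p \<in> ?T"
      by (intro CollectI exI[of _ "\<lambda>x. s * u x"] exI[of _ "sm s z"])
        (auto simp: Mo.scale_right_distrib Mo.scale_sum_right intro: Mo.subspace_scale[OF IM_sub] R.subspace_scale[OF J])
  qed
  show ?thesis unfolding IM_def'[of J]
  proof (rule Mo.span_minimal[OF _ Tsub], safe)
    fix a y assume a: "a \<in> J"
    obtain u z where uz: "z \<in> IM (ideal_pow m N)" "y = (\<Sum>x\<in>X. sm (u x) x) + z" using d unfolding dec_def by blast
    have ua: "u x * a \<in> J" for x by (rule R.subspace_scale[OF J a])
    show "\<exists>e z. sm a y = (\<Sum>x\<in>X. sm (e x) x) + z \<and> (\<forall>x. e x \<in> J) \<and> z \<in> IM (ideal_pow m N)"
      unfolding uz(2) using ua uz(1)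
      by (intro exI[of _ "\<lambda>x. u x * a"] exI[of _ "sm a z"])
        (auto simp: Mo.scale_right_distrib Mo.scale_sum_right mult.commute intro: Mo.subspace_scale[OF IM_sub])
  qed
qed

end



context P4
begin

lemma span_one_m: "VA.span ({1} \<union> m) = UNIV"
proof -
  have "a \<in> VA.span ({1} \<union> m)" for a
  proof -
    obtain c where c: "a - phi c \<in> m" using res unfolding residue_field_is_def by blast
    have "phi c * 1 + (a - phi c) \<in> VA.span ({1} \<union> m)"
      using c by (intro VA.span_add VA.span_scale VA.span_base) auto
    then show ?thesis by simp
  qed
  then show ?thesis by auto
qed

lemma fin_mM: "fin_quot_dim (\<lambda>c x. sm (phi c) x) (IM m)"
proof -
  obtain S where S: "finite S" "Mo.span S = UNIV" using fg unfolding finitely_generated_mod_def by auto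
  have "dec m S" unfolding dec_def
  proof
    fix v
    have "v \<in> Mo.span S" using S by simp
    then obtain u where "v = (\<Sum>x\<in>S. sm (u x) x)" unfolding Mo.span_finite[OF S(1)] by auto
    then show "\<exists>u z. z \<in> IM m \<and> v = (\<Sum>x\<in>S. sm (u x) x) + z"
      using Mo.subspace_0[OF IM_sub] by (intro exI[of _ u] exI[of _ 0]) auto
  qed
  from lemG[OF m_ideal _ span_one_m S(1) this] S(1) show ?thesis
    unfolding fin_quot_dim_def by (intro exI[of _ "(\<lambda>(b, x). sm b x) ` ({1} \<times> S)"]) auto
qed

lemma backward:
  assumes H: "\<forall>N::nat. N > 0 \<longrightarrow> dim_tensor_quot phi sm (ideal_pow m N)
              = dim_ring_quot phi (ideal_pow m N) * dim_tensor_quot phi sm m"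
    and cI: "colength phi I n"
  shows "dim_tensor_quot phi sm I = n * dim_tensor_quot phi sm m"
proof -
  define r where "r = dim_tensor_quot phi sm m"
  have r: "r = quot_dim (\<lambda>c x. sm (phi c) x) (IM m)" unfolding r_def dim_tensor_quot_def by simp
  obtain X where X: "finite X" "card X = r" "VM.span (X \<union> IM m) = UNIV"
    using VM.qd_basis[OF fin_mM] r by auto
  have dm: "dec m X" by (rule dec_m[OF X(1) X(3)])
  have I: "R.subspace I" "fin_quot_dim (\<lambda>c a. phi c * a) I" "quot_dim (\<lambda>c a. phi c * a) I = n"
    using cI unfolding colength_def ring_ideal_def dim_ring_quot_def by auto
  obtain N where N: "N > 0" "ideal_pow m N \<subseteq> I" using pow_sub_I[OF I(1,2)] by blast
  define P where "P = ideal_pow m N"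
  obtain Bn where Bn: "finite Bn" "card Bn = quot_dim (\<lambda>c a. phi c * a) P" "VA.span (Bn \<union> P) = UNIV"
    using VA.qd_basis[OF fin_pow[of N]] unfolding P_def by blast
  have dP: "dec P X" unfolding P_def by (rule dec_pow[OF dm])
  have spP: "VM.span ((\<lambda>(b, x). sm b x) ` (Bn \<times> X) \<union> IM P) = UNIV"
    by (rule lemG[OF pow_ideal[of N, folded P_def] Bn(1) Bn(3) X(1) dP])
  have "card (Bn \<times> X) = quot_dim (\<lambda>c x. sm (phi c) x) (IM P)"
    using H N(1) Bn(2) X(2) unfolding r_def P_def dim_tensor_quot_def dim_ring_quot_def
    by (simp add: card_cartesian_product)
  then have indP: "indep_mod (\<lambda>c x. sm (phi c) x) (IM P) (\<lambda>(b, x). sm b x) (Bn \<times> X)"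
    using VM.qd_indep[OF _ spP] Bn(1) X(1) by simp
  have star: "\<forall>x\<in>X. a x \<in> P" if "(\<Sum>x\<in>X. sm (a x) x) \<in> IM P" for a
    by (rule lemGi[OF pow_ideal[of N, folded P_def] Bn(1) Bn(3) X(1) indP that])
  obtain BI where BI: "finite BI" "card BI = n" "VA.span (BI \<union> I) = UNIV"
    "indep_mod (\<lambda>c a. phi c * a) I id BI"
    using VA.qd_basis[OF I(2)] I(3) by blast
  have dI: "dec I X" using dec_mono[OF N(2) dP[unfolded P_def]] .
  have spI: "VM.span ((\<lambda>(b, x). sm b x) ` (BI \<times> X) \<union> IM I) = UNIV"
    by (rule lemG[OF I(1) BI(1) BI(3) X(1) dI])
  have indI: "indep_mod (\<lambda>c x. sm (phi c) x) (IM I) (\<lambda>(b, x). sm b x) (BI \<times> X)"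
    unfolding indep_mod_def
  proof (intro allI impI)
    fix C assume hC: "(\<Sum>i\<in>BI \<times> X. sm (phi (C i)) ((\<lambda>(b, x). sm b x) i)) \<in> IM I"
    define a where "a = (\<lambda>x. \<Sum>b\<in>BI. phi (C (b, x)) * b)"
    have "(\<Sum>x\<in>X. sm (a x) x) \<in> IM I" using hC unfolding a_def sum_rearr .
    then obtain e z where ez: "(\<Sum>x\<in>X. sm (a x) x) = (\<Sum>x\<in>X. sm (e x) x) + z" "\<forall>x. e x \<in> I" "z \<in> IM P"
      using IM_repr[OF dP[unfolded P_def] I(1)] unfolding P_def by blast
    have "(\<Sum>x\<in>X. sm (a x - e x) x) = z"
      using ez(1) by (simp add: Mo.scale_left_diff_distrib sum_subtractf)
    then have "(\<Sum>x\<in>X. sm (a x - e x) x) \<in> IM P" using ez(3) by simp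
    then have "\<forall>x\<in>X. a x - e x \<in> P" by (rule star)
    then have aI: "a x \<in> I" if "x \<in> X" for x
      using that N(2) ez(2) R.subspace_add[OF I(1), of "a x - e x" "e x"] unfolding P_def by auto
    show "\<forall>i\<in>BI \<times> X. C i = 0"
    proof clarify
      fix b x assume bx: "b \<in> BI" "x \<in> X"
      have "(\<Sum>b\<in>BI. phi (C (b, x)) * id b) \<in> I" using aI[OF bx(2)] unfolding a_def by simp
      then show "C (b, x) = 0"
        using BI(4)[unfolded indep_mod_def, THEN spec[of _ "\<lambda>b. C (b, x)"]] bx(1) by simp
    qed
  qed
  have "quot_dim (\<lambda>c x. sm (phi c) x) (IM I) = card (BI \<times> X)"
    by (rule VM.qd_eq[OF IM_VM _ spI indI]) (use BI(1) X(1) in auto)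
  then have "dim_tensor_quot phi sm I = n * r" unfolding dim_tensor_quot_def
    using BI(2) X(2) by (simp add: card_cartesian_product)
  then show ?thesis unfolding r_def .
qed

lemma forward:
  assumes H: "\<forall>n::nat. n > 0 \<longrightarrow> (\<forall>I. colength phi I n \<longrightarrow>
            dim_tensor_quot phi sm I = n * dim_tensor_quot phi sm m)"
    and n: "n > 0"
  shows "dim_tensor_quot phi sm (ideal_pow m n)
              = dim_ring_quot phi (ideal_pow m n) * dim_tensor_quot phi sm m"
proof -
  define d where "d = dim_ring_quot phi (ideal_pow m n)"
  have c: "colength phi (ideal_pow m n) d"
    unfolding colength_def d_def ring_ideal_def using pow_ideal fin_pow by auto
  have "d > 0"
  proof (rule ccontr)
    assume "\<not> d > 0"
    then have d0: "quot_dim (\<lambda>c a. phi c * a) (ideal_pow m n) = 0"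
      unfolding d_def dim_ring_quot_def by simp
    obtain B where B: "finite B" "card B = 0" "VA.span (B \<union> ideal_pow m n) = UNIV"
      using VA.qd_ex[OF fin_pow[of n]] d0 by auto
    then have "B = {}" by simp
    then have "VA.span (ideal_pow m n) = UNIV" using B(3) by simp
    then have "ideal_pow m n = UNIV" by (metis VA.span_eq_iff R_sub_VA pow_ideal)
    then show False using pow_sub_m[OF n] m_ne by auto
  qed
  with H c show ?thesis unfolding d_def by auto
qed

end



theorem proposition4:
  fixes phi :: "'k::field \<Rightarrow> 'a::comm_ring_1"
    and m :: "'a set"
    and sm :: "'a \<Rightarrow> 'm::ab_group_add \<Rightarrow> 'm"
  assumes "algebraically_closed TYPE('k)"
    and "ring_hom_fun phi"
    and "noetherian_ring TYPE('a)"
    and "local_ring_with_max m"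
    and "residue_field_is phi m"
    and "module sm"
    and "finitely_generated_mod sm"
  shows "(\<forall>n::nat. n > 0 \<longrightarrow> (\<forall>I. colength phi I n \<longrightarrow>
            dim_tensor_quot phi sm I = n * dim_tensor_quot phi sm m))
     \<longleftrightarrow> (\<forall>n::nat. n > 0 \<longrightarrow>
            dim_tensor_quot phi sm (ideal_pow m n)
              = dim_ring_quot phi (ideal_pow m n) * dim_tensor_quot phi sm m)"
proof -
  have p4: "P4 phi m sm" unfolding P4_def using assms(2-7) by blast
  show ?thesis using P4.forward[OF p4] P4.backward[OF p4] by blast
qed

end
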